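(* Let $k,n$ be integers with $n>2$ and $k\geq 4$, and let $c$ be an exact $k$-coloring of $\mathcal{B}_n$ with $c(\emptyset)=c([n])$ such that $\mathcal{B}_n$ contains no rainbow induced copy of $\mathcal{B}_2$. Then every rainbow chain in $\mathcal{B}_n$ has at most $4$ sets.
   Context: $\mathcal{B}_n$ is the Boolean lattice of subsets of $[n]$ under inclusion. An exact $k$-coloring is a surjective map $c:\mathcal{B}_n\to[k]$. A rainbow chain is a chain of sets whose colors are pairwise distinct. A rainbow induced copy of $\mathcal{B}_2$ is four sets $W_1\subsetneq W_2,W_3\subsetneq W_4$ with $W_2,W_3$ incomparable and pairwise distinct colors. *)

theory Defs
  imports Main
begin

definition boolean_lattice :: "nat \<Rightarrow> nat set set" where
  "boolean_lattice n = Pow {1..n}"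

definition exact_coloring :: "nat \<Rightarrow> nat \<Rightarrow> (nat set \<Rightarrow> nat) \<Rightarrow> bool" where
  "exact_coloring n k c \<longleftrightarrow> c ` boolean_lattice n = {1..k}"

definition is_chain :: "nat set set \<Rightarrow> bool" where
  "is_chain C \<longleftrightarrow> (\<forall>A\<in>C. \<forall>B\<in>C. A \<subseteq> B \<or> B \<subseteq> A)"

definition rainbow_chain :: "nat \<Rightarrow> (nat set \<Rightarrow> nat) \<Rightarrow> nat set set \<Rightarrow> bool" where
  "rainbow_chain n c C \<longleftrightarrow> C \<subseteq> boolean_lattice n \<and> is_chain C \<and> inj_on c C"

definition rainbow_induced_B2 :: "nat \<Rightarrow> (nat set \<Rightarrow> nat) \<Rightarrow> bool" where
  "rainbow_induced_B2 n c \<longleftrightarrow>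
     (\<exists>W1 W2 W3 W4. W1 \<in> boolean_lattice n \<and> W2 \<in> boolean_lattice n \<and>
        W3 \<in> boolean_lattice n \<and> W4 \<in> boolean_lattice n \<and>
        W1 \<subset> W2 \<and> W1 \<subset> W3 \<and> W2 \<subset> W4 \<and> W3 \<subset> W4 \<and>
        \<not> W2 \<subseteq> W3 \<and> \<not> W3 \<subseteq> W2 \<and>
        distinct [c W1, c W2, c W3, c W4])"

end

theory Submission
  imports Defs
begin

lemma chain_list:
  assumes "finite C" "is_chain C" "\<forall>A\<in>C. finite A" "card C \<ge> m"
  shows "\<exists>xs. length xs = m \<and> set xs \<subseteq> C \<and> sorted_wrt (\<subset>) xs"
  using assms
proof (induction m arbitrary: C)
  case 0
  then show ?case by auto
next
  case (Suc m)
  then have ne: "C \<noteq> {}" by auto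
  have "Max (card ` C) \<in> card ` C" using Suc.prems(1) ne by simp
  then obtain M where M0: "M \<in> C" "card M = Max (card ` C)" by auto
  have M: "M \<in> C" "\<forall>y\<in>C. card y \<le> card M"
    using M0 Suc.prems(1) by auto
  have lt: "\<forall>A\<in>C - {M}. A \<subset> M"
  proof
    fix A assume A: "A \<in> C - {M}"
    have "A \<subseteq> M \<or> M \<subseteq> A" using Suc.prems(2) A M(1) unfolding is_chain_def by blast
    moreover have "\<not> M \<subset> A"
    proof
      assume "M \<subset> A"
      then have "card M < card A" using Suc.prems(3) A by (meson DiffD1 psubset_card_mono)
      then show False using M(2) A by force
    qed
    ultimately show "A \<subset> M" using A by blast
  qed
  have "finite (C - {M})" using Suc.prems(1) by simp
  moreover have "is_chain (C - {M})" using Suc.prems(2) unfolding is_chain_def by blast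
  moreover have "\<forall>A\<in>C - {M}. finite A" using Suc.prems(3) by blast
  moreover have "card (C - {M}) \<ge> m" using Suc.prems(1,4) M(1) by (simp add: card_Diff_singleton)
  ultimately have "\<exists>xs. length xs = m \<and> set xs \<subseteq> C - {M} \<and> sorted_wrt (\<subset>) xs"
    by (rule Suc.IH)
  then obtain xs where xs: "length xs = m" "set xs \<subseteq> C - {M}" "sorted_wrt (\<subset>) xs"
    by blast
  have "\<forall>x\<in>set xs. x \<subset> M" using xs(2) lt by blast
  then have "sorted_wrt (\<subset>) (xs @ [M])" using xs(3) by (simp add: sorted_wrt_append)
  moreover have "length (xs @ [M]) = Suc m" using xs(1) by simp
  moreover have "set (xs @ [M]) \<subseteq> C" using xs(2) M(1) by auto
  ultimately show ?case by (intro exI[of _ "xs @ [M]"] conjI)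
qed

theorem lemma2p11:
  fixes n k :: nat and c :: "nat set \<Rightarrow> nat"
  assumes "n > 2" and "k \<ge> 4"
    and "exact_coloring n k c"
    and "c {} = c {1..n}"
    and "\<not> rainbow_induced_B2 n c"
  shows "\<forall>C. rainbow_chain n c C \<longrightarrow> card C \<le> 4"
proof (intro allI impI, rule ccontr)
  fix C assume rc: "rainbow_chain n c C" and "\<not> card C \<le> 4"
  then have c5: "card C \<ge> 5" by simp
  have sub: "C \<subseteq> Pow {1..n}" "is_chain C" "inj_on c C"
    using rc unfolding rainbow_chain_def boolean_lattice_def by auto
  have fin: "finite C" using sub(1) finite_subset by blast
  have "\<forall>A\<in>C. finite A" using sub(1) finite_subset by blast
  then obtain xs where xs: "length xs = 5" "set xs \<subseteq> C" "sorted_wrt (\<subset>) xs"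
    using chain_list[OF fin sub(2)] c5 by blast
  then obtain X1 X2 X3 X4 X5 where xeq: "xs = [X1,X2,X3,X4,X5]"
    by (auto simp: length_Suc_conv numeral_eq_Suc)
  have inC: "X1 \<in> C" "X2 \<in> C" "X3 \<in> C" "X4 \<in> C" "X5 \<in> C" using xs(2) xeq by auto
  have s: "X1 \<subset> X2" "X2 \<subset> X3" "X3 \<subset> X4" "X4 \<subset> X5" using xs(3) xeq by auto
  have X5n: "X5 \<subseteq> {1..n}" using inC sub(1) by auto
  have dc: "distinct [c X1, c X2, c X3, c X4, c X5]"
  proof -
    have t: "X1 \<subset> X3" "X1 \<subset> X4" "X1 \<subset> X5" "X2 \<subset> X4" "X2 \<subset> X5" "X3 \<subset> X5"
      using s by (meson psubset_trans)+
    have "distinct xs" unfolding xeq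
      using less_imp_neq[OF s(1)] less_imp_neq[OF s(2)] less_imp_neq[OF s(3)] less_imp_neq[OF s(4)]
        less_imp_neq[OF t(1)] less_imp_neq[OF t(2)] less_imp_neq[OF t(3)] less_imp_neq[OF t(4)]
        less_imp_neq[OF t(5)] less_imp_neq[OF t(6)]
      by (simp only: distinct.simps list.set insert_iff empty_iff) blast
    then have "distinct (map c xs)" using inj_on_subset[OF sub(3) xs(2)] by (simp only: distinct_map)
    then show ?thesis unfolding xeq by simp
  qed
  have nr: "\<not> distinct [c W1, c W2, c W3, c W4]"
    if "W4 \<subseteq> {1..n}" "W1 \<subset> W2" "W1 \<subset> W3" "W2 \<subset> W4" "W3 \<subset> W4"
       "\<not> W2 \<subseteq> W3" "\<not> W3 \<subseteq> W2" for W1 W2 W3 W4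
    using assms(5) that unfolding rainbow_induced_B2_def boolean_lattice_def
    by (smt (verit) Pow_iff order.trans psubset_imp_subset)
  define A where "A = X1 \<union> (X4 - X3)"
  define B where "B = X2 \<union> (X4 - X3)"
  define E where "E = X2 \<union> (X5 - X4)"
  define F where "F = X1 \<union> (X5 - X3)"
  let ?N = "{1..n::nat}"
  have q1: "\<not> distinct [c {}, c X2, c A, c B]" using s X5n unfolding A_def B_def by (intro nr) blast+
  have q2: "\<not> distinct [c {}, c E, c X4, c X5]" using s X5n unfolding E_def by (intro nr) blast+
  have q3: "\<not> distinct [c {}, c F, c X4, c X5]" using s X5n unfolding F_def by (intro nr) blast+
  have q4: "\<not> distinct [c X1, c X2, c A, c B]" using s X5n unfolding A_def B_def by (intro nr) blast+
  have q5: "\<not> distinct [c X1, c F, c X4, c X5]" using s X5n unfolding F_def by (intro nr) blast+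
  have q6: "\<not> distinct [c X1, c X2, c A, c ?N]" using s X5n unfolding A_def by (intro nr) blast+
  have q7: "\<not> distinct [c X1, c X2, c F, c ?N]" using s X5n unfolding F_def by (intro nr) blast+
  have q8: "\<not> distinct [c X1, c A, c X3, c ?N]" using s X5n unfolding A_def by (intro nr) blast+
  have q9: "\<not> distinct [c X1, c X3, c B, c ?N]" using s X5n unfolding B_def by (intro nr) blast+
  have q10: "\<not> distinct [c X1, c X3, c F, c ?N]" using s X5n unfolding F_def by (intro nr) blast+
  have q11: "\<not> distinct [c X2, c X3, c B, c X4]" using s X5n unfolding B_def by (intro nr) blast+
  have q12: "\<not> distinct [c X2, c X3, c B, c X5]" using s X5n unfolding B_def by (intro nr) blast+
  have q13: "\<not> distinct [c X2, c X3, c E, c X5]" using s X5n unfolding E_def by (intro nr) blast+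
  have q14: "\<not> distinct [c X2, c X3, c E, c ?N]" using s X5n unfolding E_def by (intro nr) blast+
  show False using q1 q2 q3 q4 q5 q6 q7 q8 q9 q10 q11 q12 q13 q14 dc assms(4)
    by (simp only: distinct.simps set_simps insert_iff empty_iff) smt
qed

end
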